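(* Let $\alpha,\beta,\lambda$ be constants with $\beta\ge 3+2\alpha$ and $0<\lambda<\alpha$. Let $U=[0,1]^2$ and $S\subset U$ finite with $(0,0)\in S$, with tiles, $\beta$-tiles, parallelograms $A_i$ and the directed graph $G$ as in the context. Then the total area of all parallelograms $A_i$ at level $1$ of $G$ is at most $$\frac{2(1+\alpha)^2+\lambda(2+\alpha)}{2(1+\alpha)^2}.$$
   Context: Tiling: fix a total order of $S$ in which $p$ precedes $q$ whenever $x(p)+y(p)>x(q)+y(q)$ (ties broken arbitrarily but consistently). Process the points in this order; from the current point cast a ray vertically upward and a ray horizontally rightward, each stopping when it hits the boundary of $U$ or a ray cast from a previously processed point. This partitions $U$ into tiles $t_1,\dots,t_n$, one per point $p_i\in S$: $t_i$ is a simple rectilinear polygon with lower-left corner $p_i$, whose bottom edge $a_i$ and left edge $b_i$ lie on the two rays cast from $p_i$, and whose remaining boundary is a staircase from the top end of $b_i$ to the right end of $a_i$. A concave corner of $t_i$ is a vertex with interior angle $270^\circ$. $t_i$ is a $\beta$-tile if every axis-parallel rectangle contained in $t_i$ has area less than $\frac1\beta\mathrm{area}(t_i)$. The right tip of $t_i$ is the smallest-area region among those of the form "all points of $t_i$ to the right of a vertical line through a concave corner of $t_i$" that have area at least $\frac{\alpha}{\beta}\mathrm{area}(t_i)$; the upper tip is defined analogously with horizontal lines and points above. The main body $t_i'$ consists of the points of $t_i$ in neither tip; $a_i'$ is its bottom edge (a segment of $a_i$ starting at $p_i$), $|\cdot|$ denotes length. $A_i$ is the parallelogram with vertices $p_i$,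 $p_i+(|a_i'|,0)$, $p_i+((1+\lambda)|a_i'|,-\lambda|a_i'|)$, $p_i+(\lambda|a_i'|,-\lambda|a_i'|)$. Graph $G$: its nodes are the parallelograms $A_i$ of the $\beta$-tiles $t_i$. Fix a total order $\succ_y$ on $S$ with $p\succ_y q$ whenever $y(p)>y(q)$. If $A_i$ intersects some other node parallelogram $A_j$ with $p_i\succ_y p_j$, then $A_i$ gets exactly one outgoing edge, to the $\succ_y$-largest such $A_j$ (i.e. the one whose segment $a_j'$ is highest below $a_i'$); otherwise $A_i$ has no outgoing edge. Nodes without outgoing edges are at level $1$; a node is at level $k+1$ if its outgoing edge goes to a level-$k$ node. *)

theory Defs
  imports "HOL-Analysis.Analysis"
begin

type_synonym pt = "real \<times> real"

definition unit_square :: "pt set" where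
  "unit_square = {(0::real)..1} \<times> {(0::real)..1}"

definition area :: "pt set \<Rightarrow> real" where
  "area X = measure lebesgue X"

text \<open>An accumulator entry (q, u, r): processed point q whose upward ray ends at
  height u and whose rightward ray ends at abscissa r.\<close>

definition up_end :: "(pt \<times> real \<times> real) list \<Rightarrow> pt \<Rightarrow> real" where
  "up_end acc p = Min (insert 1 ((\<lambda>(q,u,r). snd q) `
      {e \<in> set acc. case e of (q,u,r) \<Rightarrow> snd q > snd p \<and> fst q \<le> fst p \<and> fst p \<le> r}))"

definition right_end :: "(pt \<times> real \<times> real) list \<Rightarrow> pt \<Rightarrow> real" where
  "right_end acc p = Min (insert 1 ((\<lambda>(q,u,r). fst q) `
      {e \<in> set acc. case e of (q,u,r) \<Rightarrow> fst q > fst p \<and> snd q \<le> snd p \<and> snd p \<le> u}))"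

fun build_rays :: "pt list \<Rightarrow> (pt \<times> real \<times> real) list \<Rightarrow> (pt \<times> real \<times> real) list" where
  "build_rays [] acc = acc"
| "build_rays (p # ps) acc = build_rays ps (acc @ [(p, up_end acc p, right_end acc p)])"

definition ray_up :: "pt list \<Rightarrow> pt \<Rightarrow> real" where
  "ray_up ps p = fst (the (map_of (build_rays ps []) p))"

definition ray_right :: "pt list \<Rightarrow> pt \<Rightarrow> real" where
  "ray_right ps p = snd (the (map_of (build_rays ps []) p))"

definition aseg :: "pt list \<Rightarrow> pt \<Rightarrow> pt set" where
  "aseg ps p = {fst p .. ray_right ps p} \<times> {snd p}"

definition bseg :: "pt list \<Rightarrow> pt \<Rightarrow> pt set" where
  "bseg ps p = {fst p} \<times> {snd p .. ray_up ps p}"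

definition segs :: "pt list \<Rightarrow> pt set" where
  "segs ps = (\<Union>p\<in>set ps. aseg ps p \<union> bseg ps p)"

text \<open>The (closed) tile with lower-left corner p: the closure of the points z strictly
  to the upper right of p such that the open box between p and z meets no ray,
  together with the two rays from p (relevant only for degenerate tiles).\<close>
definition tile :: "pt list \<Rightarrow> pt \<Rightarrow> pt set" where
  "tile ps p = closure {z \<in> unit_square. fst p < fst z \<and> snd p < snd z \<and>
        ({fst p<..<fst z} \<times> {snd p<..<snd z}) \<inter> segs ps = {}}
     \<union> aseg ps p \<union> bseg ps p"

definition beta_tile :: "real \<Rightarrow> pt set \<Rightarrow> bool" where
  "beta_tile \<beta> t \<longleftrightarrow> (\<forall>a b c d. a \<le> b \<and> c \<le> d \<and> {a..b} \<times> {c..d} \<subseteq> t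
        \<longrightarrow> (b - a) * (d - c) < area t / \<beta>)"

definition quadrant :: "pt \<Rightarrow> real \<Rightarrow> real \<Rightarrow> real \<Rightarrow> pt set" where
  "quadrant c e sx sy = {z. 0 < sx * (fst z - fst c) \<and> sx * (fst z - fst c) < e \<and>
                            0 < sy * (snd z - snd c) \<and> sy * (snd z - snd c) < e}"

text \<open>A vertex with interior angle 270 degrees: near c, exactly three of the four
  quadrants lie in t and the remaining one lies outside t.\<close>
definition concave_corner :: "pt set \<Rightarrow> pt \<Rightarrow> bool" where
  "concave_corner t c \<longleftrightarrow> c \<in> t \<and> (\<exists>e>0.
      let Q = {quadrant c e 1 1, quadrant c e 1 (-1), quadrant c e (-1) 1, quadrant c e (-1) (-1)}
      in \<exists>q\<in>Q. q \<inter> t = {} \<and> (\<forall>q'\<in>Q - {q}. q' \<subseteq> t))"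

definition right_cands :: "real \<Rightarrow> real \<Rightarrow> pt set \<Rightarrow> pt set set" where
  "right_cands \<alpha> \<beta> t = {R. \<exists>c. concave_corner t c \<and> R = {z \<in> t. fst z > fst c}
                                  \<and> area R \<ge> \<alpha> / \<beta> * area t}"

definition upper_cands :: "real \<Rightarrow> real \<Rightarrow> pt set \<Rightarrow> pt set set" where
  "upper_cands \<alpha> \<beta> t = {R. \<exists>c. concave_corner t c \<and> R = {z \<in> t. snd z > snd c}
                                  \<and> area R \<ge> \<alpha> / \<beta> * area t}"

definition smallest_area :: "pt set set \<Rightarrow> pt set" where
  "smallest_area C = (if C = {} then {} else (SOME R. R \<in> C \<and> (\<forall>R'\<in>C. area R \<le> area R')))"

definition right_tip :: "real \<Rightarrow> real \<Rightarrow> pt set \<Rightarrow> pt set" where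
  "right_tip \<alpha> \<beta> t = smallest_area (right_cands \<alpha> \<beta> t)"

definition upper_tip :: "real \<Rightarrow> real \<Rightarrow> pt set \<Rightarrow> pt set" where
  "upper_tip \<alpha> \<beta> t = smallest_area (upper_cands \<alpha> \<beta> t)"

definition main_body :: "real \<Rightarrow> real \<Rightarrow> pt set \<Rightarrow> pt set" where
  "main_body \<alpha> \<beta> t = t - right_tip \<alpha> \<beta> t - upper_tip \<alpha> \<beta> t"

definition a'_len :: "real \<Rightarrow> real \<Rightarrow> pt list \<Rightarrow> pt \<Rightarrow> real" where
  "a'_len \<alpha> \<beta> ps p = Sup {fst z - fst p | z. z \<in> main_body \<alpha> \<beta> (tile ps p) \<and> snd z = snd p}"

definition parallelogram :: "real \<Rightarrow> pt \<Rightarrow> real \<Rightarrow> pt set" where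
  "parallelogram lam p L = convex hull {p, (fst p + L, snd p),
       (fst p + (1 + lam) * L, snd p - lam * L), (fst p + lam * L, snd p - lam * L)}"

definition paraA :: "real \<Rightarrow> real \<Rightarrow> real \<Rightarrow> pt list \<Rightarrow> pt \<Rightarrow> pt set" where
  "paraA \<alpha> \<beta> lam ps p = parallelogram lam p (a'_len \<alpha> \<beta> ps p)"

definition G_nodes :: "real \<Rightarrow> pt list \<Rightarrow> pt set" where
  "G_nodes \<beta> ps = {p \<in> set ps. beta_tile \<beta> (tile ps p)}"

text \<open>gy is the strict total order \<succ>_y; (p,q) \<in> gy means p \<succ>_y q.
  The outgoing edge of node p goes to the gy-largest candidate below p.\<close>
definition out_candidates :: "real \<Rightarrow> real \<Rightarrow> real \<Rightarrow> pt list \<Rightarrow> (pt \<times> pt) set \<Rightarrow> pt \<Rightarrow> pt set" where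
  "out_candidates \<alpha> \<beta> lam ps gy p = {q \<in> G_nodes \<beta> ps. q \<noteq> p \<and> (p, q) \<in> gy \<and>
        paraA \<alpha> \<beta> lam ps p \<inter> paraA \<alpha> \<beta> lam ps q \<noteq> {}}"

definition G_edge :: "real \<Rightarrow> real \<Rightarrow> real \<Rightarrow> pt list \<Rightarrow> (pt \<times> pt) set \<Rightarrow> pt \<Rightarrow> pt \<Rightarrow> bool" where
  "G_edge \<alpha> \<beta> lam ps gy p q \<longleftrightarrow> p \<in> G_nodes \<beta> ps \<and> q \<in> out_candidates \<alpha> \<beta> lam ps gy p \<and>
        (\<forall>q'\<in>out_candidates \<alpha> \<beta> lam ps gy p. q' = q \<or> (q, q') \<in> gy)"

definition level1 :: "real \<Rightarrow> real \<Rightarrow> real \<Rightarrow> pt list \<Rightarrow> (pt \<times> pt) set \<Rightarrow> pt set" where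
  "level1 \<alpha> \<beta> lam ps gy = {p \<in> G_nodes \<beta> ps. \<not> (\<exists>q. G_edge \<alpha> \<beta> lam ps gy p q)}"

end

theory Submission
  imports Defs
begin
definition T0 :: "pt list \<Rightarrow> pt \<Rightarrow> pt set" where
  "T0 ps p = {z \<in> unit_square. fst p < fst z \<and> snd p < snd z \<and>
        ({fst p<..<fst z} \<times> {snd p<..<snd z}) \<inter> segs ps = {}}"

lemma tile_eq: "tile ps p = closure (T0 ps p) \<union> aseg ps p \<union> bseg ps p"
  by (simp add: tile_def T0_def)

lemma build_rays_prop:
  "\<forall>e\<in>set (build_rays qs acc). e \<in> set acc \<or> (fst e \<in> set qs \<and> fst (snd e) \<le> 1 \<and> snd (snd e) \<le> 1
     \<and> (snd (fst e) \<le> 1 \<longrightarrow> snd (fst e) \<le> fst (snd e)) \<and> (fst (fst e) \<le> 1 \<longrightarrow> fst (fst e) \<le> snd (snd e)))"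
proof (induction qs arbitrary: acc)
  case Nil
  then show ?case by simp
next
  case (Cons a qs)
  have f: "finite ((\<lambda>(q,u,r). snd q) ` {e \<in> set acc. case e of (q,u,r) \<Rightarrow> snd q > snd a \<and> fst q \<le> fst a \<and> fst a \<le> r})"
    by simp
  have g: "finite ((\<lambda>(q,u,r). fst q) ` {e \<in> set acc. case e of (q,u,r) \<Rightarrow> fst q > fst a \<and> snd q \<le> snd a \<and> snd a \<le> u})"
    by simp
  have u1: "up_end acc a \<le> 1" unfolding up_end_def using f by (simp add: Min_le_iff)
  have r1: "right_end acc a \<le> 1" unfolding right_end_def using g by (simp add: Min_le_iff)
  have u2: "snd a \<le> 1 \<Longrightarrow> snd a \<le> up_end acc a" unfolding up_end_def using f
    by (subst Min_ge_iff) auto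
  have r2: "fst a \<le> 1 \<Longrightarrow> fst a \<le> right_end acc a" unfolding right_end_def using g
    by (subst Min_ge_iff) auto
  show ?case using Cons.IH[of "acc @ [(a, up_end acc a, right_end acc a)]"] u1 r1 u2 r2
    by auto
qed

lemma build_rays_fst: "fst ` set (build_rays qs acc) = fst ` set acc \<union> set qs"
  by (induction qs arbitrary: acc) auto

lemma ray_props:
  assumes "p \<in> set ps" "p \<in> unit_square"
  shows "ray_right ps p \<le> 1" "fst p \<le> ray_right ps p" "ray_up ps p \<le> 1" "snd p \<le> ray_up ps p"
proof -
  have "p \<in> fst ` set (build_rays ps [])" using assms build_rays_fst[of ps "[]"] by simp
  then obtain v where v: "map_of (build_rays ps []) p = Some v"
    by (metis map_of_eq_None_iff not_Some_eq)
  then have "(p, v) \<in> set (build_rays ps [])" by (rule map_of_SomeD)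
  then have P: "fst v \<le> 1 \<and> snd v \<le> 1 \<and> (snd p \<le> 1 \<longrightarrow> snd p \<le> fst v) \<and> (fst p \<le> 1 \<longrightarrow> fst p \<le> snd v)"
    using build_rays_prop[of ps "[]"] by fastforce
  have "fst p \<le> 1" "snd p \<le> 1" using assms(2) by (auto simp: unit_square_def)
  then show "ray_right ps p \<le> 1" "fst p \<le> ray_right ps p" "ray_up ps p \<le> 1" "snd p \<le> ray_up ps p"
    using P v by (auto simp: ray_right_def ray_up_def)
qed

lemma closed_unit_square: "closed unit_square"
  unfolding unit_square_def by (intro closed_Times) auto

lemma T0_sub: "T0 ps p \<subseteq> unit_square" by (auto simp: T0_def)

lemma clT0_sub: "closure (T0 ps p) \<subseteq> unit_square"
  by (meson T0_sub closed_unit_square closure_minimal)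

lemma clT0_ge: "closure (T0 ps p) \<subseteq> {z. fst p \<le> fst z \<and> snd p \<le> snd z}"
proof (rule closure_minimal)
  show "T0 ps p \<subseteq> {z. fst p \<le> fst z \<and> snd p \<le> snd z}" by (auto simp: T0_def)
  show "closed {z::pt. fst p \<le> fst z \<and> snd p \<le> snd z}"
    by (intro closed_Collect_conj closed_Collect_le continuous_intros)
qed

lemma tile_ge: "z \<in> tile ps p \<Longrightarrow> fst p \<le> fst z \<and> snd p \<le> snd z"
  using clT0_ge[of ps p] by (auto simp: tile_eq aseg_def bseg_def)

lemma tile_sub:
  assumes "p \<in> set ps" "p \<in> unit_square"
  shows "tile ps p \<subseteq> unit_square"
  using clT0_sub[of ps p] ray_props[OF assms] assms(2)
  by (auto simp: tile_eq aseg_def bseg_def unit_square_def)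

lemma closed_tile: "closed (tile ps p)"
  unfolding tile_eq aseg_def bseg_def by (intro closed_Un closed_Times) auto

lemma p_in_tile:
  assumes "p \<in> set ps" "p \<in> unit_square"
  shows "p \<in> tile ps p"
  using ray_props[OF assms] by (cases p) (auto simp: tile_eq aseg_def)

lemma tile_inner:
  "z \<in> tile ps p \<Longrightarrow> fst p < fst z \<Longrightarrow> snd p < snd z \<Longrightarrow> z \<in> closure (T0 ps p)"
  by (auto simp: tile_eq aseg_def bseg_def)

lemma free:
  assumes "z \<in> closure (T0 ps p)" "w \<in> segs ps"
    "fst p < fst w" "fst w < fst z" "snd p < snd w" "snd w < snd z"
  shows False
proof -
  let ?O = "{x::pt. fst w < fst x \<and> snd w < snd x}"
  have o: "open ?O" by (intro open_Collect_conj open_Collect_less continuous_intros)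
  have "z \<in> ?O" using assms by auto
  then have "?O \<inter> closure (T0 ps p) \<noteq> {}" using assms(1) by blast
  then have "?O \<inter> T0 ps p \<noteq> {}" using open_Int_closure_eq_empty[OF o] by blast
  then obtain z' where "z' \<in> T0 ps p" "fst w < fst z'" "snd w < snd z'" by blast
  then have "w \<in> {fst p<..<fst z'} \<times> {snd p<..<snd z'} \<inter> segs ps"
    using assms by (simp add: mem_Times_iff)
  then show False using \<open>z' \<in> T0 ps p\<close> by (auto simp: T0_def)
qed

lemma strict:
  assumes "z \<in> closure (T0 ps p)" "p \<in> unit_square"
    "fst p < fst w" "fst w < fst z" "snd p < snd w" "snd w < snd z"
  shows "w \<in> T0 ps p"
proof -
  have "z \<in> unit_square" using assms(1) clT0_sub by blast
  then have "w \<in> unit_square" using assms by (cases w) (auto simp: unit_square_def)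
  moreover have "({fst p<..<fst w} \<times> {snd p<..<snd w}) \<inter> segs ps = {}"
  proof (rule ccontr)
    assume "\<not> ?thesis"
    then obtain v where "v \<in> segs ps" "fst p < fst v" "fst v < fst w" "snd p < snd v" "snd v < snd w"
      by auto
    then show False using free[OF assms(1), of v] assms by auto
  qed
  ultimately show ?thesis using assms by (auto simp: T0_def)
qed

lemma extend:
  assumes "z \<in> closure (T0 ps p)" "p \<in> unit_square"
    "fst p < fst z" "snd p < snd z" "fst z < x2" "x2 \<le> 1"
    "\<forall>q\<in>set ps. \<not> (fst z \<le> fst q \<and> fst q < x2)"
    "snd p < y" "y < snd z"
  shows "(x2, y) \<in> T0 ps p"
proof -
  have "z \<in> unit_square" using assms(1) clT0_sub by blast
  then have U: "(x2, y) \<in> unit_square" using assms by (auto simp: unit_square_def)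
  have "({fst p<..<x2} \<times> {snd p<..<y}) \<inter> segs ps = {}"
  proof (rule ccontr)
    assume "\<not> ?thesis"
    then obtain w where w: "w \<in> segs ps" "fst p < fst w" "fst w < x2" "snd p < snd w" "snd w < y"
      by auto
    have wz: "fst z \<le> fst w"
    proof (rule ccontr)
      assume "\<not> ?thesis"
      then show False using free[OF assms(1) w(1)] w assms by auto
    qed
    from w(1) obtain q where q: "q \<in> set ps" "w \<in> aseg ps q \<union> bseg ps q" unfolding segs_def by blast
    show False
    proof (cases "w \<in> bseg ps q")
      case True
      then have "fst q = fst w" by (auto simp: bseg_def)
      then show False using assms(7) q(1) wz w by auto
    next
      case False
      then have wa: "w \<in> aseg ps q" using q by auto
      then have a: "snd w = snd q" "fst q \<le> fst w" "fst w \<le> ray_right ps q" by (auto simp: aseg_def)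
      have "fst q < fst z" using assms(7) q(1) a w by force
      define x' where "x' = max (fst q) ((fst p + fst z) / 2)"
      have "(x', snd w) \<in> aseg ps q" using a wz assms unfolding aseg_def x'_def by auto
      then have "(x', snd w) \<in> segs ps" using q(1) unfolding segs_def by blast
      moreover have "fst p < x'" "x' < fst z" unfolding x'_def using assms \<open>fst q < fst z\<close> by (auto simp: less_max_iff_disj)
      ultimately show False using free[OF assms(1), of "(x', snd w)"] w assms by auto
    qed
  qed
  then show ?thesis using U assms by (auto simp: T0_def)
qed

lemma vert_closure:
  assumes "\<forall>y. snd p < y \<and> y < Y \<longrightarrow> (x2, y) \<in> T0 ps p" "snd p < Y"
  shows "(x2, Y) \<in> closure (T0 ps p)"
proof -
  have "{x2} \<times> {snd p<..<Y} \<subseteq> T0 ps p" using assms(1) by auto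
  then have "closure ({x2} \<times> {snd p<..<Y}) \<subseteq> closure (T0 ps p)" by (rule closure_mono)
  moreover have "closure ({x2} \<times> {snd p<..<Y}) = {x2} \<times> {snd p..Y}"
    using assms(2) by (simp add: closure_Times)
  ultimately show ?thesis using assms(2) by auto
qed

lemma quad_iff:
  "z \<in> quadrant c e 1 1 \<longleftrightarrow> fst c < fst z \<and> fst z < fst c + e \<and> snd c < snd z \<and> snd z < snd c + e"
  "z \<in> quadrant c e 1 (-1) \<longleftrightarrow> fst c < fst z \<and> fst z < fst c + e \<and> snd c - e < snd z \<and> snd z < snd c"
  "z \<in> quadrant c e (-1) 1 \<longleftrightarrow> fst c - e < fst z \<and> fst z < fst c \<and> snd c < snd z \<and> snd z < snd c + e"
  "z \<in> quadrant c e (-1) (-1) \<longleftrightarrow> fst c - e < fst z \<and> fst z < fst c \<and> snd c - e < snd z \<and> snd z < snd c"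
  by (auto simp: quadrant_def)

lemma min3: "0 < (a::real) \<Longrightarrow> 0 < b \<Longrightarrow> 0 < c \<Longrightarrow> 0 < min a (min b c)/2 \<and> min a (min b c)/2 < a \<and> min a (min b c)/2 < b \<and> min a (min b c)/2 < c"
  by (simp add: min_def)
lemma min2: "0 < (a::real) \<Longrightarrow> 0 < b \<Longrightarrow> 0 < min a b/2 \<and> min a b/2 < a \<and> min a b/2 < b"
  by (simp add: min_def)

lemma corner_props:
  assumes cc: "concave_corner (tile ps p) c" and pS: "p \<in> set ps" and sq: "set ps \<subseteq> unit_square"
  shows "c \<in> set ps" "fst p < fst c" "snd p < snd c"
    "\<And>z. z \<in> tile ps p \<Longrightarrow> fst c < fst z \<Longrightarrow> snd z \<le> snd c"
    "\<And>z. z \<in> tile ps p \<Longrightarrow> snd c < snd z \<Longrightarrow> fst z \<le> fst c"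
proof -
  let ?t = "tile ps p"
  have pU: "p \<in> unit_square" using pS sq by auto
  have tU: "?t \<subseteq> unit_square" using tile_sub[OF pS pU] .
  have cT: "c \<in> ?t" using cc by (simp add: concave_corner_def)
  obtain e where e: "e > 0" and ex: "\<exists>q\<in>{quadrant c e 1 1, quadrant c e 1 (-1), quadrant c e (-1) 1, quadrant c e (-1) (-1)}.
      q \<inter> ?t = {} \<and> (\<forall>q'\<in>{quadrant c e 1 1, quadrant c e 1 (-1), quadrant c e (-1) 1, quadrant c e (-1) (-1)} - {q}. q' \<subseteq> ?t)"
    using cc unfolding concave_corner_def Let_def by blast
  define NE where "NE = quadrant c e 1 1"
  define SE where "SE = quadrant c e 1 (-1)"
  define NW where "NW = quadrant c e (-1) 1"
  define SW where "SW = quadrant c e (-1) (-1)"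
  have pNE: "(fst c + e/2, snd c + e/2) \<in> NE" "(fst c + e/2, snd c + e/2) \<notin> SE"
     "(fst c + e/2, snd c + e/2) \<notin> NW" "(fst c + e/2, snd c + e/2) \<notin> SW"
    using e by (auto simp: NE_def SE_def NW_def SW_def quad_iff)
  have pSE: "(fst c + e/2, snd c - e/2) \<in> SE" "(fst c + e/2, snd c - e/2) \<notin> NW"
     "(fst c + e/2, snd c - e/2) \<notin> SW"
    using e by (auto simp: SE_def NW_def SW_def quad_iff)
  have pNW: "(fst c - e/2, snd c + e/2) \<in> NW" "(fst c - e/2, snd c + e/2) \<notin> SW"
    using e by (auto simp: NW_def SW_def quad_iff)
  have neq: "NE \<noteq> SE" "NE \<noteq> NW" "NE \<noteq> SW" "SE \<noteq> NW" "SE \<noteq> SW" "NW \<noteq> SW"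
    using pNE pSE pNW by blast+
  from ex obtain q0 where q0: "q0 \<in> {NE, SE, NW, SW}" "q0 \<inter> ?t = {}"
    "\<forall>q'\<in>{NE, SE, NW, SW} - {q0}. q' \<subseteq> ?t"
    unfolding NE_def SE_def NW_def SW_def by blast
  have ge: "\<And>z. z \<in> ?t \<Longrightarrow> fst p \<le> fst z \<and> snd p \<le> snd z" using tile_ge by blast
  have NWx: "fst p < fst c" if "NW \<subseteq> ?t"
    using ge[of "(fst c - e/2, snd c + e/2)"] pNW that e by auto
  have SEy: "snd p < snd c" if "SE \<subseteq> ?t"
    using ge[of "(fst c + e/2, snd c - e/2)"] pSE that e by auto
  have SWxy: "fst p < fst c \<and> snd p < snd c" if "SW \<subseteq> ?t"
  proof -
    have "(fst c - e/2, snd c - e/2) \<in> SW" using e by (auto simp: SW_def quad_iff)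
    then show ?thesis using ge[of "(fst c - e/2, snd c - e/2)"] that e by auto
  qed
  have down: "w \<in> ?t" if "z \<in> ?t" "fst p < fst w" "fst w < fst z" "snd p < snd w" "snd w < snd z" for z w
  proof -
    have "z \<in> closure (T0 ps p)" using tile_inner[OF that(1)] that by auto
    from strict[OF this pU] that have "w \<in> T0 ps p" by auto
    then show ?thesis unfolding tile_eq by (auto intro: closure_subset[THEN subsetD])
  qed
  have q0NE: "q0 = NE"
  proof (rule ccontr)
    assume nq: "q0 \<noteq> NE"
    then have NEt: "NE \<subseteq> ?t" using q0(3) by blast
    have zNE: "(fst c + e/2, snd c + e/2) \<in> ?t" using NEt pNE by blast
    consider "q0 = SE" | "q0 = NW" | "q0 = SW" using q0(1) nq by blast
    then show False
    proof cases
      case 1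
      then have "SW \<subseteq> ?t" using q0(3) neq by auto
      then have cp: "fst p < fst c" "snd p < snd c" using SWxy by auto
      define d where "d = min (e/2) (snd c - snd p) / 2"
      have d: "0 < d" "d < e/2" "d < snd c - snd p" using e cp unfolding d_def by auto
      have "(fst c + d, snd c - d) \<in> ?t"
        using down[OF zNE] d cp by auto
      moreover have "(fst c + d, snd c - d) \<in> SE" using d by (auto simp: SE_def quad_iff)
      ultimately show False using q0(2) 1 by blast
    next
      case 2
      then have "SW \<subseteq> ?t" using q0(3) neq by auto
      then have cp: "fst p < fst c" "snd p < snd c" using SWxy by auto
      define d where "d = min (e/2) (fst c - fst p) / 2"
      have d: "0 < d" "d < e/2" "d < fst c - fst p" using e cp unfolding d_def by auto
      have "(fst c - d, snd c + d) \<in> ?t"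
        using down[OF zNE] d cp by auto
      moreover have "(fst c - d, snd c + d) \<in> NW" using d by (auto simp: NW_def quad_iff)
      ultimately show False using q0(2) 2 by blast
    next
      case 3
      then have "NW \<subseteq> ?t" "SE \<subseteq> ?t" using q0(3) neq by auto
      then have cp: "fst p < fst c" "snd p < snd c" using NWx SEy by auto
      define d where "d = min (e/2) (min (fst c - fst p) (snd c - snd p)) / 2"
      have d: "0 < d" "d < e/2" "d < fst c - fst p" "d < snd c - snd p" using e cp unfolding d_def by auto
      have "(fst c - d, snd c - d) \<in> ?t"
        using down[OF zNE] d cp by auto
      moreover have "(fst c - d, snd c - d) \<in> SW" using d by (auto simp: SW_def quad_iff)
      ultimately show False using q0(2) 3 by blast
    qed
  qed
  have NEd: "NE \<inter> ?t = {}" using q0 q0NE by simp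
  have NWt: "NW \<subseteq> ?t" and SEt: "SE \<subseteq> ?t" and SWt: "SW \<subseteq> ?t" using q0 q0NE neq by auto
  show cpx: "fst p < fst c" and cpy: "snd p < snd c" using SWxy SWt by auto
  show "snd z \<le> snd c" if "z \<in> ?t" "fst c < fst z" for z
  proof (rule ccontr)
    assume nt: "\<not> ?thesis"
    define d where "d = min (e/2) (min (fst z - fst c) (snd z - snd c)) / 2"
    have d: "0 < d" "d < e/2" "d < fst z - fst c" "d < snd z - snd c"
      using min3[of "e/2" "fst z - fst c" "snd z - snd c"] e that nt unfolding d_def by auto
    have "(fst c + d, snd c + d) \<in> ?t" using down[OF that(1)] d cpx cpy by auto
    moreover have "(fst c + d, snd c + d) \<in> NE" using d by (auto simp: NE_def quad_iff)
    ultimately show False using NEd by blast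
  qed
  show "fst z \<le> fst c" if "z \<in> ?t" "snd c < snd z" for z
  proof (rule ccontr)
    assume nt: "\<not> ?thesis"
    define d where "d = min (e/2) (min (fst z - fst c) (snd z - snd c)) / 2"
    have d: "0 < d" "d < e/2" "d < fst z - fst c" "d < snd z - snd c"
      using min3[of "e/2" "fst z - fst c" "snd z - snd c"] e that nt unfolding d_def by auto
    have "(fst c + d, snd c + d) \<in> ?t" using down[OF that(1)] d cpx cpy by auto
    moreover have "(fst c + d, snd c + d) \<in> NE" using d by (auto simp: NE_def quad_iff)
    ultimately show False using NEd by blast
  qed
  have free1: False if "w \<in> segs ps" "fst p < fst w" "fst w < fst c" "snd p < snd w" "snd w < snd c + e" for w
  proof -
    define a where "a = (max (fst w) (fst c - e) + fst c) / 2"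
    define b where "b = (max (snd w) (snd c) + snd c + e) / 2"
    have m1: "max (fst w) (fst c - e) < fst c" "fst w \<le> max (fst w) (fst c - e)" "fst c - e \<le> max (fst w) (fst c - e)"
      using that e by auto
    have m2: "max (snd w) (snd c) < snd c + e" "snd w \<le> max (snd w) (snd c)" "snd c \<le> max (snd w) (snd c)"
      using that e by auto
    have ab0: "fst c - e < a" using m1 m2 e a_def b_def by argo
    have ab1: "a < fst c" using m1 m2 e a_def b_def by argo
    have ab2: "fst w < a" using m1 m2 e a_def b_def by argo
    have ab3: "snd c < b" using m1 m2 e a_def b_def by argo
    have ab4: "b < snd c + e" using m1 m2 e a_def b_def by argo
    have ab5: "snd w < b" using m1 m2 e a_def b_def by argo
    note ab = ab0 ab1 ab2 ab3 ab4 ab5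
    have "(a, b) \<in> NW" using ab unfolding NW_def quad_iff by simp
    then have "(a, b) \<in> ?t" using NWt by blast
    moreover have "fst p < a" "snd p < b" using ab that by linarith+
    ultimately have "(a, b) \<in> closure (T0 ps p)" using tile_inner[of "(a,b)" ps p] by simp
    then show False using free[of "(a,b)" ps p w] that ab by simp
  qed
  have free2: False if "w \<in> segs ps" "fst p < fst w" "fst w < fst c + e" "snd p < snd w" "snd w < snd c" for w
  proof -
    define a where "a = (max (fst w) (fst c) + fst c + e) / 2"
    define b where "b = (max (snd w) (snd c - e) + snd c) / 2"
    have m1: "max (snd w) (snd c - e) < snd c" "snd w \<le> max (snd w) (snd c - e)" "snd c - e \<le> max (snd w) (snd c - e)"
      using that e by auto
    have m2: "max (fst w) (fst c) < fst c + e" "fst w \<le> max (fst w) (fst c)" "fst c \<le> max (fst w) (fst c)"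
      using that e by auto
    have ab0: "snd c - e < b" using m1 m2 e a_def b_def by argo
    have ab1: "b < snd c" using m1 m2 e a_def b_def by argo
    have ab2: "snd w < b" using m1 m2 e a_def b_def by argo
    have ab3: "fst c < a" using m1 m2 e a_def b_def by argo
    have ab4: "a < fst c + e" using m1 m2 e a_def b_def by argo
    have ab5: "fst w < a" using m1 m2 e a_def b_def by argo
    note ab = ab0 ab1 ab2 ab3 ab4 ab5
    have "(a, b) \<in> SE" using ab unfolding SE_def quad_iff by simp
    then have "(a, b) \<in> ?t" using SEt by blast
    moreover have "fst p < a" "snd p < b" using ab that by linarith+
    ultimately have "(a, b) \<in> closure (T0 ps p)" using tile_inner[of "(a,b)" ps p] by simp
    then show False using free[of "(a,b)" ps p w] that ab by simp
  qed
  have closed_segs: "closed (segs ps)"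
    unfolding segs_def aseg_def bseg_def by (rule closed_UN) (auto intro!: closed_Un closed_Times)
  have "c \<in> closure (segs ps)"
    unfolding closure_approachable
  proof (intro allI impI)
    fix eps :: real assume eps: "eps > 0"
    define d where "d = min (e/2) (eps/2)"
    have d: "0 < d" "d < e" "d \<le> eps/2" using e eps unfolding d_def by auto
    have "(fst c + d, snd c - d) \<in> SE" using d by (auto simp: SE_def quad_iff)
    then have "(fst c + d, snd c - d) \<in> unit_square" using SEt tU by blast
    moreover have "(fst c - d, snd c + d) \<in> NW" using d by (auto simp: NW_def quad_iff)
    then have "(fst c - d, snd c + d) \<in> unit_square" using NWt tU by blast
    moreover have "c \<in> unit_square" using cT tU by blast
    ultimately have zU: "(fst c + d, snd c + d) \<in> unit_square" by (auto simp: unit_square_def)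
    have zNE: "(fst c + d, snd c + d) \<in> NE" using d by (auto simp: NE_def quad_iff)
    have "(fst c + d, snd c + d) \<notin> T0 ps p"
      using zNE NEd unfolding tile_eq by (auto dest: closure_subset[THEN subsetD])
    then obtain w where w: "w \<in> segs ps" "fst p < fst w" "fst w < fst c + d" "snd p < snd w" "snd w < snd c + d"
      using zU cpx cpy d unfolding T0_def by (auto simp: mem_Times_iff)
    have wx: "fst c \<le> fst w"
    proof (rule ccontr)
      assume "\<not> fst c \<le> fst w"
      then show False using free1[OF w(1)] w(2,4,5) d by linarith
    qed
    have wy: "snd c \<le> snd w"
    proof (rule ccontr)
      assume "\<not> snd c \<le> snd w"
      then show False using free2[OF w(1)] w(2,3,4) d by linarith
    qed
    have "dist w c < eps"
    proof -
      have "dist w c = sqrt ((fst w - fst c)^2 + (snd w - snd c)^2)"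
        by (cases w, cases c) (simp add: dist_Pair_Pair dist_real_def)
      also have "\<dots> \<le> (fst w - fst c) + (snd w - snd c)"
        using wx wy mult_nonneg_nonneg[of "fst w - fst c" "snd w - snd c"]
        by (intro real_le_lsqrt) (auto simp: power2_eq_square algebra_simps)
      also have "\<dots> < eps" using w d by auto
      finally show ?thesis .
    qed
    then show "\<exists>y\<in>segs ps. dist y c < eps" using w(1) by blast
  qed
  then have "c \<in> segs ps" using closed_segs by (simp add: closure_closed)
  then obtain q where q: "q \<in> set ps" "c \<in> aseg ps q \<union> bseg ps q" unfolding segs_def by blast
  show "c \<in> set ps"
  proof (cases "c \<in> aseg ps q")
    case True
    then have a: "snd c = snd q" "fst q \<le> fst c" "fst c \<le> ray_right ps q" by (auto simp: aseg_def)
    have "fst q = fst c"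
    proof (rule ccontr)
      assume "fst q \<noteq> fst c"
      then have lt: "fst q < fst c" using a by auto
      define x' where "x' = max (fst q) ((fst p + fst c) / 2)"
      have "(x', snd c) \<in> aseg ps q" using a lt cpx unfolding aseg_def x'_def by auto
      then have "(x', snd c) \<in> segs ps" using q(1) unfolding segs_def by blast
      moreover have "fst p < x'" "x' < fst c" unfolding x'_def using lt cpx by (auto simp: less_max_iff_disj)
      ultimately show False using free1[of "(x', snd c)"] cpy e by auto
    qed
    then have "c = q" using a by (simp add: prod_eq_iff)
    then show ?thesis using q by simp
  next
    case False
    then have a: "fst c = fst q" "snd q \<le> snd c" "snd c \<le> ray_up ps q" using q by (auto simp: bseg_def)
    have "snd q = snd c"
    proof (rule ccontr)
      assume "snd q \<noteq> snd c"
      then have lt: "snd q < snd c" using a by auto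
      define y' where "y' = max (snd q) ((snd p + snd c) / 2)"
      have "(fst c, y') \<in> bseg ps q" using a lt cpy unfolding bseg_def y'_def by auto
      then have "(fst c, y') \<in> segs ps" using q(1) unfolding segs_def by blast
      moreover have "snd p < y'" "y' < snd c" unfolding y'_def using lt cpy by (auto simp: less_max_iff_disj)
      ultimately show False using free2[of "(fst c, y')"] cpx e by auto
    qed
    then have "c = q" using a by (simp add: prod_eq_iff)
    then show ?thesis using q by simp
  qed
qed

lemma area_box: "a \<le> b \<Longrightarrow> c \<le> d \<Longrightarrow> area (cbox (a,c) (b,d)) = (b-a)*(d-c)"
  unfolding area_def by (simp add: content_Pair)

lemma area_sub: assumes "X \<subseteq> Y" "Y \<in> lmeasurable" shows "area X \<le> area Y"
  unfolding area_def
  by (metis assms(1,2) measure_mono_fmeasurable measure_nonneg measure_notin_sets)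

lemma box_Pair_eq: "box (a::real, c::real) (b, d) = {a<..<b} \<times> {c<..<d}"
  by (auto simp: box_def Basis_prod_def ball_Un inner_Pair)

lemma area_nonneg: "0 \<le> area X" unfolding area_def by simp

lemma unit_square_cbox: "unit_square = cbox (0,0) (1,1)" by (simp add: unit_square_def cbox_Pair_eq)

lemma max_snd: "compact (S::pt set) \<Longrightarrow> S \<noteq> {} \<Longrightarrow> \<exists>x\<in>S. \<forall>y\<in>S. snd y \<le> snd x"
proof -
  assume "compact S" "S \<noteq> {}"
  then have "compact (snd ` S)" by (intro compact_continuous_image continuous_intros)
  from compact_attains_sup[OF this] \<open>S \<noteq> {}\<close> show ?thesis by auto
qed

lemma max_fst: "compact (S::pt set) \<Longrightarrow> S \<noteq> {} \<Longrightarrow> \<exists>x\<in>S. \<forall>y\<in>S. fst y \<le> fst x"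
proof -
  assume "compact S" "S \<noteq> {}"
  then have "compact (fst ` S)" by (intro compact_continuous_image continuous_intros)
  from compact_attains_sup[OF this] \<open>S \<noteq> {}\<close> show ?thesis by auto
qed

lemma compact_tile:
  assumes "p \<in> set ps" "p \<in> unit_square"
  shows "compact (tile ps p)"
proof -
  have "bounded (tile ps p)" using tile_sub[OF assms] unfolding unit_square_cbox
    by (meson bounded_cbox bounded_subset)
  then show ?thesis using closed_tile by (simp add: compact_eq_bounded_closed)
qed

lemma compact_clT0: "compact (closure (T0 ps p))"
proof -
  have "bounded (closure (T0 ps p))" using clT0_sub unfolding unit_square_cbox
    by (meson bounded_cbox bounded_subset)
  then show ?thesis by (simp add: compact_eq_bounded_closed)
qed

lemma horiz_closure:
  assumes "\<forall>x. X0 < x \<and> x < X \<longrightarrow> (x, y) \<in> T0 ps p" "X0 < X"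
  shows "(X, y) \<in> closure (T0 ps p)"
proof -
  have "{X0<..<X} \<times> {y} \<subseteq> T0 ps p" using assms(1) by auto
  then have "closure ({X0<..<X} \<times> {y}) \<subseteq> closure (T0 ps p)" by (rule closure_mono)
  moreover have "closure ({X0<..<X} \<times> {y}) = {X0..X} \<times> {y}"
    using assms(2) by (simp add: closure_Times)
  ultimately show ?thesis using assms(2) by auto
qed

lemma rect_in_tile:
  assumes "z \<in> closure (T0 ps p)" "p \<in> unit_square" "fst p < fst z" "snd p < snd z"
  shows "cbox p z \<subseteq> closure (T0 ps p)"
proof -
  have "box p z \<subseteq> T0 ps p"
  proof
    fix w assume "w \<in> box p z"
    then have "w \<in> {fst p<..<fst z} \<times> {snd p<..<snd z}"
      by (cases p, cases z) (simp add: box_Pair_eq)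
    then have "fst p < fst w" "fst w < fst z" "snd p < snd w" "snd w < snd z"
      by (auto simp: mem_Times_iff)
    then show "w \<in> T0 ps p" using strict[OF assms(1,2)] by auto
  qed
  then have "closure (box p z) \<subseteq> closure (T0 ps p)" by (rule closure_mono)
  moreover have "box p z \<noteq> {}" using assms(3,4)
    by (cases p, cases z) (auto simp: box_Pair_eq)
  ultimately show ?thesis by simp
qed

lemma exists_corner:
  assumes pS: "p \<in> set ps" and sq: "set ps \<subseteq> unit_square" and bt: "beta_tile \<beta> (tile ps p)"
    and ba: "1 + \<alpha> \<le> \<beta>" and a0: "0 < \<alpha>"
  shows "\<exists>c. concave_corner (tile ps p) c \<and> \<alpha> / \<beta> * area (tile ps p) \<le> area {z \<in> tile ps p. fst c < fst z}"
proof -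
  let ?t = "tile ps p"
  let ?C = "closure (T0 ps p)"
  define A where "A = area ?t"
  have pU: "p \<in> unit_square" using pS sq by auto
  have tU: "?t \<subseteq> unit_square" using tile_sub[OF pS pU] .
  have tc: "compact ?t" using compact_tile[OF pS pU] .
  have tm: "?t \<in> lmeasurable" using lmeasurable_compact[OF tc] .
  have b0: "0 < \<beta>" using ba a0 by linarith
  have A0: "0 < A"
  proof -
    have "{fst p..fst p} \<times> {snd p..snd p} \<subseteq> ?t" using p_in_tile[OF pS pU] by (cases p) auto
    then have "(fst p - fst p) * (snd p - snd p) < area ?t / \<beta>" using bt unfolding beta_tile_def by blast
    then show ?thesis using b0 unfolding A_def by (simp add: zero_less_divide_iff)
  qed
  define H where "H = cbox (0::real, snd p) (1, snd p)"
  define V where "V = cbox (fst p, 0::real) (fst p, 1)"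
  have HVm: "H \<union> V \<in> lmeasurable" unfolding H_def V_def by auto
  have HV0: "area (H \<union> V) = 0"
  proof -
    have "area (H \<union> V) \<le> area H + area V" unfolding area_def
      by (rule measure_Un_le) (auto simp: H_def V_def)
    also have "area H = 0" unfolding H_def by (subst area_box) auto
    also have "area V = 0" unfolding V_def by (subst area_box) auto
    finally show ?thesis using area_nonneg[of "H \<union> V"] by simp
  qed
  have null: "area X = 0" if "X \<subseteq> H \<union> V" for X
    using area_sub[OF that HVm] HV0 area_nonneg[of X] by simp
  have segHV: "aseg ps p \<union> bseg ps p \<subseteq> H \<union> V"
    using ray_props[OF pS pU] pU unfolding aseg_def bseg_def H_def V_def unit_square_def
    by (auto simp: cbox_Pair_eq)
  have Cne: "?C \<noteq> {}"
  proof
    assume "?C = {}"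
    then have "?t \<subseteq> H \<union> V" using segHV unfolding tile_eq by auto
    then show False using null A0 unfolding A_def by auto
  qed
  have Cc: "compact ?C" by (rule compact_clT0)
  obtain zY where zY: "zY \<in> ?C" "\<forall>z\<in>?C. snd z \<le> snd zY" using max_snd[OF Cc Cne] by blast
  define Y where "Y = snd zY"
  have CYc: "compact (?C \<inter> {z. snd z = Y})"
    by (intro compact_Int_closed Cc closed_Collect_eq continuous_intros)
  have CYne: "?C \<inter> {z. snd z = Y} \<noteq> {}" using zY Y_def by auto
  obtain zX where zX: "zX \<in> ?C" "snd zX = Y" "\<forall>z\<in>?C \<inter> {z. snd z = Y}. fst z \<le> fst zX"
    using max_fst[OF CYc CYne] by blast
  define X1 where "X1 = fst zX"
  have XY: "(X1, Y) \<in> ?C" using zX X1_def by (cases zX) auto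
  have Xmax: "\<And>x. (x, Y) \<in> ?C \<Longrightarrow> x \<le> X1" using zX X1_def by force
  have Ymax: "\<And>z. z \<in> ?C \<Longrightarrow> snd z \<le> Y" using zY Y_def by auto
  have X1p: "fst p \<le> X1" and Yp: "snd p \<le> Y" using clT0_ge[of ps p] XY by auto
  define rect where "rect = cbox (fst p, snd p) (X1, Y)"
  have rectA: "area rect \<le> A / \<beta>"
  proof (cases "fst p < X1 \<and> snd p < Y")
    case True
    then have "cbox p (X1, Y) \<subseteq> ?C" using rect_in_tile[OF XY pU] by auto
    then have "{fst p..X1} \<times> {snd p..Y} \<subseteq> ?t" unfolding tile_eq by (cases p) (auto simp: cbox_Pair_eq)
    then have "(X1 - fst p) * (Y - snd p) < A / \<beta>" using bt unfolding beta_tile_def A_def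
      using X1p Yp by blast
    then show ?thesis unfolding rect_def using X1p Yp area_box[of "fst p" X1 "snd p" Y] by simp
  next
    case False
    then have "area rect = 0" unfolding rect_def using X1p Yp area_box[of "fst p" X1 "snd p" Y] by auto
    then show ?thesis using A0 b0 by simp
  qed
  define D where "D = {z \<in> ?t. X1 < fst z}"
  have Deq: "D = ?t \<inter> {z. X1 < fst z}" unfolding D_def by auto
  have om: "{z::pt. X1 < fst z} \<in> sets lebesgue"
    by (rule sets_completionI_sets) (simp add: borel_open open_Collect_less continuous_intros)
  have Dm: "D \<in> sets lebesgue" unfolding Deq by (rule sets.Int[OF fmeasurableD[OF tm] om])
  have Dfm: "D \<in> lmeasurable" by (rule fmeasurableI2[OF tm _ Dm]) (auto simp: D_def)
  have tsub: "?t \<subseteq> rect \<union> D \<union> (H \<union> V)"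
  proof
    fix z assume z: "z \<in> ?t"
    show "z \<in> rect \<union> D \<union> (H \<union> V)"
    proof (cases "z \<in> ?C")
      case True
      then have "snd z \<le> Y" "fst p \<le> fst z" "snd p \<le> snd z" using Ymax clT0_ge[of ps p] by auto
      then show ?thesis using z unfolding rect_def D_def by (cases p, cases z) (auto simp: cbox_Pair_eq)
    next
      case False
      then show ?thesis using z segHV unfolding tile_eq by auto
    qed
  qed
  have DA: "A - A / \<beta> \<le> area D"
  proof -
    have "A \<le> area (rect \<union> D \<union> (H \<union> V))" unfolding A_def
      by (rule area_sub[OF tsub]) (use HVm Dfm in \<open>auto simp: rect_def\<close>)
    also have "\<dots> \<le> area (rect \<union> D) + area (H \<union> V)" unfolding area_def
      by (rule measure_Un_le) (use HVm Dm in \<open>auto simp: rect_def\<close>)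
    also have "area (rect \<union> D) \<le> area rect + area D" unfolding area_def
      by (rule measure_Un_le) (use Dm in \<open>auto simp: rect_def\<close>)
    finally show ?thesis using rectA HV0 by simp
  qed
  have aux: "\<alpha> / \<beta> * A \<le> A - A / \<beta>"
  proof -
    have "\<alpha> / \<beta> * A + A / \<beta> = (1 + \<alpha>) / \<beta> * A" by (simp add: add_divide_distrib algebra_simps)
    also have "\<dots> \<le> 1 * A" using ba b0 A0 by (intro mult_right_mono) auto
    finally show ?thesis by simp
  qed
  have DA2: "\<alpha> / \<beta> * A \<le> area D" using DA aux by linarith
  have DApos: "0 < area D" using DA2 a0 b0 A0 by (smt (verit) divide_pos_pos mult_pos_pos)
  have "\<exists>z0. z0 \<in> ?t \<and> X1 < fst z0 \<and> snd p < snd z0"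
  proof (rule ccontr)
    assume nz: "\<not> ?thesis"
    have "D \<subseteq> H"
    proof
      fix z assume z: "z \<in> D"
      then have zt: "z \<in> ?t" "X1 < fst z" unfolding D_def by auto
      then have "\<not> snd p < snd z" using nz by blast
      then have "snd z = snd p" using tile_ge[of z ps p] zt(1) by linarith
      moreover have "0 \<le> fst z" "fst z \<le> 1" using zt tU by (auto simp: unit_square_def)
      ultimately show "z \<in> H" unfolding H_def by (cases z) (auto simp: cbox_Pair_eq)
    qed
    then have "D \<subseteq> H \<union> V" by blast
    then show False using null[of D] DApos by linarith
  qed
  then obtain z0 where z0: "z0 \<in> ?t" "X1 < fst z0" "snd p < snd z0" by blast
  have z0C: "z0 \<in> ?C" using tile_inner[OF z0(1)] z0 X1p by auto
  have Ygt: "snd p < Y" using Ymax[OF z0C] z0 by auto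
  have z01: "fst z0 \<le> 1" using z0(1) tU by (auto simp: unit_square_def)
  define XS where "XS = fst ` set ps \<union> {1::real}"
  have XSf: "finite XS" unfolding XS_def by auto
  define a where "a = Min {x \<in> XS. X1 < x}"
  have aS: "{x \<in> XS. X1 < x} \<noteq> {}" "finite {x \<in> XS. X1 < x}" using XSf z0 z01 unfolding XS_def by auto
  have ain: "a \<in> {x \<in> XS. X1 < x}" using Min_in[OF aS(2,1)] unfolding a_def .
  have a4: "\<And>x. x \<in> XS \<Longrightarrow> X1 < x \<Longrightarrow> a \<le> x" using Min_le[OF aS(2)] unfolding a_def by blast
  have "1 \<in> XS" "X1 < 1" using z0 z01 unfolding XS_def by auto
  then have a: "a \<in> XS" "X1 < a" "a \<le> 1" "\<And>x. x \<in> XS \<Longrightarrow> X1 < x \<Longrightarrow> a \<le> x"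
    using ain a4 by auto
  have X1gt: "fst p < X1"
  proof (rule ccontr)
    assume "\<not> fst p < X1"
    then have X1eq: "X1 = fst p" using X1p by simp
    have "(a, y) \<in> T0 ps p" if y: "snd p < y" "y < Y" for y
    proof -
      define eps where "eps = min (a - X1) (Y - y)"
      have eps: "0 < eps" using a y unfolding eps_def by auto
      obtain z where z: "z \<in> T0 ps p" "dist z (X1, Y) < eps"
        using XY eps unfolding closure_approachable by blast
      have "dist (fst z) X1 < eps" "dist (snd z) Y < eps"
        using z(2) dist_fst_le[of z "(X1,Y)"] dist_snd_le[of z "(X1,Y)"] by auto
      then have zb: "fst z < a" "y < snd z" unfolding eps_def dist_real_def by auto
      have zp: "fst p < fst z" "snd p < snd z" using z(1) unfolding T0_def by auto
      have nq: "\<forall>q\<in>set ps. \<not> (fst z \<le> fst q \<and> fst q < a)"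
      proof (intro ballI notI)
        fix q assume q: "q \<in> set ps" and h: "fst z \<le> fst q \<and> fst q < a"
        have "fst q \<in> XS" using q unfolding XS_def by blast
        moreover have "X1 < fst q" using h zp X1eq by linarith
        ultimately have "a \<le> fst q" using a(4) by blast
        then show False using h by linarith
      qed
      have zC: "z \<in> ?C" using z(1) closure_subset by blast
      show ?thesis by (rule extend[OF zC pU zp(1) zp(2) zb(1) a(3) nq y(1) zb(2)])
    qed
    then have "(a, Y) \<in> ?C" using vert_closure[of p Y a ps] Ygt by blast
    then have "a \<le> X1" by (rule Xmax)
    then show False using a(2) by linarith
  qed
  have X1S: "X1 \<in> fst ` set ps"
  proof (rule ccontr)
    assume nX: "X1 \<notin> fst ` set ps"
    define bs where "bs = {x \<in> fst ` set ps. x < X1}"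
    have bsn: "bs \<noteq> {}" "finite bs" unfolding bs_def using pS X1gt by auto
    define b where "b = Max bs"
    have b: "fst p \<le> b" "b < X1" "\<And>x. x \<in> fst ` set ps \<Longrightarrow> x < X1 \<Longrightarrow> x \<le> b"
      using Max_in[OF bsn(2,1)] Max_ge[OF bsn(2)] pS X1gt unfolding b_def bs_def by auto
    define x2 where "x2 = (X1 + a) / 2"
    have x2: "X1 < x2" "x2 < a" "x2 \<le> 1" using a unfolding x2_def by auto
    have "(x2, y) \<in> T0 ps p" if y: "snd p < y" "y < Y" for y
    proof -
      define z where "z = ((b + X1) / 2, (y + Y) / 2)"
      have zc: "fst p < fst z" "fst z < X1" "snd p < snd z" "snd z < Y" "y < snd z" "b < fst z"
        using b y unfolding z_def by auto
      have zT: "z \<in> T0 ps p" using strict[OF XY pU, of z] zc by auto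
      have "\<forall>q\<in>set ps. \<not> (fst z \<le> fst q \<and> fst q < x2)"
      proof
        fix q assume q: "q \<in> set ps"
        show "\<not> (fst z \<le> fst q \<and> fst q < x2)"
        proof
          assume h: "fst z \<le> fst q \<and> fst q < x2"
          consider "fst q < X1" | "fst q = X1" | "X1 < fst q" by linarith
          then show False
          proof cases
            case 1 then show False using b(3)[of "fst q"] q h zc by auto
          next
            case 2 then show False using nX q by (metis imageI)
          next
            case 3 then show False using a(4)[of "fst q"] q h x2 unfolding XS_def by auto
          qed
        qed
      qed
      moreover have zC: "z \<in> ?C" using zT closure_subset by blast
      moreover have "fst z < x2" using zc x2 by linarith
      ultimately show ?thesis using extend[OF zC pU zc(1) zc(3) _ x2(3) _ y(1) zc(5)] by blast
    qed
    then have "(x2, Y) \<in> ?C" using vert_closure[of p Y x2 ps] Ygt by blast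
    then have "x2 \<le> X1" by (rule Xmax)
    then show False using x2(1) by linarith
  qed
  define xs where "xs = (X1 + a) / 2"
  have xs: "X1 < xs" "xs < a" "xs \<le> 1" using a unfolding xs_def by auto
  have noq: "\<forall>q\<in>set ps. \<not> (X1 < fst q \<and> fst q < a)"
  proof (intro ballI notI)
    fix q assume q: "q \<in> set ps" and h: "X1 < fst q \<and> fst q < a"
    have "fst q \<in> XS" using q unfolding XS_def by blast
    then have "a \<le> fst q" using a(4) h by blast
    then show False using h by linarith
  qed
  have reach: "(xs, y) \<in> ?C" if z: "z \<in> ?C" "X1 < fst z" "snd p < y" "y < snd z" for z y
  proof -
    consider "xs < fst z" | "fst z = xs" | "fst z < xs" by linarith
    then show ?thesis
    proof cases
      case 1
      then have "(xs, y) \<in> T0 ps p" using strict[OF z(1) pU, of "(xs,y)"] X1gt xs z by auto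
      then show ?thesis using closure_subset by blast
    next
      case 2
      have "\<forall>x. X1 < x \<and> x < xs \<longrightarrow> (x, y) \<in> T0 ps p"
        using strict[OF z(1) pU] X1gt z 2 by auto
      then show ?thesis using horiz_closure[of X1 xs y ps p] xs by blast
    next
      case 3
      have nq: "\<forall>q\<in>set ps. \<not> (fst z \<le> fst q \<and> fst q < xs)"
      proof (intro ballI notI)
        fix q assume q: "q \<in> set ps" and h: "fst z \<le> fst q \<and> fst q < xs"
        then have "X1 < fst q \<and> fst q < a" using z(2) xs by linarith
        then show False using noq q by blast
      qed
      have zp: "fst p < fst z" "snd p < snd z" using z X1p by linarith+
      have "(xs, y) \<in> T0 ps p"
        by (rule extend[OF z(1) pU zp 3 xs(3) nq z(3) z(4)])
      then show ?thesis using closure_subset by blast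
    qed
  qed
  define SL where "SL = ?C \<inter> {z. fst z = xs}"
  have SLc: "compact SL" unfolding SL_def
    by (intro compact_Int_closed Cc closed_Collect_eq continuous_intros)
  have y0: "(xs, (snd p + snd z0) / 2) \<in> ?C" using reach[OF z0C z0(2)] z0 by auto
  have SLne: "SL \<noteq> {}" using y0 unfolding SL_def by auto
  obtain zh where zh: "zh \<in> SL" "\<forall>z\<in>SL. snd z \<le> snd zh" using max_snd[OF SLc SLne] by blast
  define h1 where "h1 = snd zh"
  have h1C: "(xs, h1) \<in> ?C" using zh unfolding SL_def h1_def by (cases zh) auto
  have h1max: "y \<le> h1" if "(xs, y) \<in> ?C" for y
  proof -
    have "(xs, y) \<in> SL" using that unfolding SL_def by simp
    then show ?thesis using zh(2) unfolding h1_def by fastforce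
  qed
  have h1p: "snd p < h1" using h1max[OF y0] z0 by auto
  have ib: "snd z \<le> h1" if "z \<in> ?t" "X1 < fst z" for z
  proof (rule ccontr)
    assume "\<not> snd z \<le> h1"
    then have zz: "h1 < snd z" by simp
    have "z \<in> ?C" using tile_inner[OF that(1)] that X1p h1p zz by auto
    from reach[OF this that(2), of "(h1 + snd z)/2"] have "(xs, (h1 + snd z)/2) \<in> ?C" using zz h1p by auto
    then have "(h1 + snd z)/2 \<le> h1" by (rule h1max)
    then show False using zz by argo
  qed
  have h1Y: "h1 < Y"
  proof -
    have "h1 \<le> Y" using Ymax[OF h1C] by simp
    moreover have "h1 \<noteq> Y" using Xmax[of xs] h1C xs by auto
    ultimately show ?thesis by simp
  qed
  have rectt: "{fst p..X1} \<times> {snd p..Y} \<subseteq> ?t"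
  proof -
    have "cbox p (X1, Y) \<subseteq> ?C" using rect_in_tile[OF XY pU] X1gt Ygt by auto
    then show ?thesis unfolding tile_eq by (cases p) (auto simp: cbox_Pair_eq)
  qed
  define c where "c = (X1, h1)"
  define e where "e = min (xs - X1) (min (Y - h1) (min (h1 - snd p) (X1 - fst p))) / 2"
  have e: "0 < e" "e < xs - X1" "e < Y - h1" "e < h1 - snd p" "e < X1 - fst p"
    using xs h1Y h1p X1gt unfolding e_def by (auto simp: min_def)
  have cT: "c \<in> ?t" using rectt h1p h1Y X1gt unfolding c_def by auto
  have NEd: "quadrant c e 1 1 \<inter> ?t = {}"
  proof (rule ccontr)
    assume "quadrant c e 1 1 \<inter> ?t \<noteq> {}"
    then obtain z where z: "z \<in> quadrant c e 1 1" "z \<in> ?t" by blast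
    then have "X1 < fst z" "h1 < snd z" unfolding c_def quad_iff by auto
    then show False using ib[OF z(2)] by linarith
  qed
  have SEt: "quadrant c e 1 (-1) \<subseteq> ?t"
  proof
    fix z assume "z \<in> quadrant c e 1 (-1)"
    then have zc: "X1 < fst z" "fst z < X1 + e" "h1 - e < snd z" "snd z < h1" unfolding c_def quad_iff by auto
    then have "z \<in> T0 ps p" using strict[OF h1C pU, of z] e X1p by auto
    then show "z \<in> ?t" unfolding tile_eq using closure_subset by blast
  qed
  have NWt: "quadrant c e (-1) 1 \<subseteq> ?t"
  proof
    fix z assume "z \<in> quadrant c e (-1) 1"
    then have zc: "X1 - e < fst z" "fst z < X1" "h1 < snd z" "snd z < h1 + e" unfolding c_def quad_iff by auto
    then show "z \<in> ?t" using rectt e h1p by (cases z) auto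
  qed
  have SWt: "quadrant c e (-1) (-1) \<subseteq> ?t"
  proof
    fix z assume "z \<in> quadrant c e (-1) (-1)"
    then have zc: "X1 - e < fst z" "fst z < X1" "h1 - e < snd z" "snd z < h1" unfolding c_def quad_iff by auto
    then show "z \<in> ?t" using rectt e h1Y by (cases z) auto
  qed
  define Q where "Q = {quadrant c e 1 1, quadrant c e 1 (-1), quadrant c e (-1) 1, quadrant c e (-1) (-1)}"
  have rest: "\<forall>q'\<in>Q - {quadrant c e 1 1}. q' \<subseteq> ?t" unfolding Q_def using SEt NWt SWt by blast
  have exq: "\<exists>q\<in>Q. q \<inter> ?t = {} \<and> (\<forall>q'\<in>Q - {q}. q' \<subseteq> ?t)"
    by (rule bexI[of _ "quadrant c e 1 1"]) (use NEd rest in \<open>auto simp: Q_def\<close>)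
  have cc: "concave_corner ?t c"
    unfolding concave_corner_def Let_def
  proof (intro conjI cT exI[of _ e])
    show "0 < e" using e(1) .
    show "\<exists>q\<in>{quadrant c e 1 1, quadrant c e 1 (-1), quadrant c e (-1) 1, quadrant c e (-1) (-1)}.
        q \<inter> ?t = {} \<and> (\<forall>q'\<in>{quadrant c e 1 1, quadrant c e 1 (-1), quadrant c e (-1) 1, quadrant c e (-1) (-1)} - {q}. q' \<subseteq> ?t)"
      using exq unfolding Q_def .
  qed
  have DD: "{z \<in> ?t. fst c < fst z} = D" unfolding c_def D_def by simp
  show ?thesis
  proof (intro exI conjI)
    show "concave_corner ?t c" by (rule cc)
    show "\<alpha> / \<beta> * area ?t \<le> area {z \<in> ?t. fst c < fst z}" using DA2 unfolding DD A_def .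
  qed
qed

lemma smallest_area_in:
  assumes "finite C" "C \<noteq> {}"
  shows "smallest_area C \<in> C \<and> (\<forall>R'\<in>C. area (smallest_area C) \<le> area R')"
proof -
  have fi: "finite (area ` C)" "area ` C \<noteq> {}" using assms by auto
  obtain R where R: "R \<in> C" "area R = Min (area ` C)" using Min_in[OF fi] by auto
  have "\<forall>R'\<in>C. area R \<le> area R'" using R(2) Min_le[OF fi(1)] by auto
  then have ex: "\<exists>R. R \<in> C \<and> (\<forall>R'\<in>C. area R \<le> area R')" using R(1) by blast
  show ?thesis unfolding smallest_area_def using assms(2) someI_ex[OF ex] by simp
qed

lemma beta_area_pos:
  assumes pS: "p \<in> set ps" and sq: "set ps \<subseteq> unit_square" and bt: "beta_tile \<beta> (tile ps p)" and b0: "0 < \<beta>"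
  shows "0 < area (tile ps p)"
proof -
  have pU: "p \<in> unit_square" using pS sq by auto
  have "{fst p..fst p} \<times> {snd p..snd p} \<subseteq> tile ps p" using p_in_tile[OF pS pU] by (cases p) auto
  then have "(fst p - fst p) * (snd p - snd p) < area (tile ps p) / \<beta>" using bt unfolding beta_tile_def by blast
  then show ?thesis using b0 by (simp add: zero_less_divide_iff)
qed

lemma L_bound:
  assumes pS: "p \<in> set ps" and sq: "set ps \<subseteq> unit_square" and bt: "beta_tile \<beta> (tile ps p)"
    and ba: "1 + \<alpha> \<le> \<beta>" and a0: "0 < \<alpha>"
  shows "0 \<le> a'_len \<alpha> \<beta> ps p \<and> a'_len \<alpha> \<beta> ps p * (1 + \<alpha>) \<le> 1 - fst p"
proof -
  let ?t = "tile ps p"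
  define A where "A = area ?t"
  have pU: "p \<in> unit_square" using pS sq by auto
  have tU: "?t \<subseteq> unit_square" using tile_sub[OF pS pU] .
  have b0: "0 < \<beta>" using ba a0 by linarith
  have A0: "0 < A" unfolding A_def by (rule beta_area_pos[OF pS sq bt b0])
  define RC where "RC = right_cands \<alpha> \<beta> ?t"
  have RCsub: "RC \<subseteq> (\<lambda>c. {z \<in> ?t. fst z > fst c}) ` set ps"
  proof
    fix R assume "R \<in> RC"
    then obtain c where c: "concave_corner ?t c" "R = {z \<in> ?t. fst z > fst c}"
      unfolding RC_def right_cands_def by blast
    then have "c \<in> set ps" using corner_props(1)[OF c(1) pS sq] by simp
    then show "R \<in> (\<lambda>c. {z \<in> ?t. fst z > fst c}) ` set ps" using c by blast
  qed
  have RCf: "finite RC" using finite_surj[OF _ RCsub] by simp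
  obtain c0 where c0: "concave_corner ?t c0" "\<alpha> / \<beta> * area ?t \<le> area {z \<in> ?t. fst c0 < fst z}"
    using exists_corner[OF pS sq bt ba a0] by blast
  have "{z \<in> ?t. fst z > fst c0} \<in> RC" unfolding RC_def right_cands_def mem_Collect_eq
    using c0 by (intro exI[of _ c0]) auto
  then have RCne: "RC \<noteq> {}" by blast
  define RT where "RT = right_tip \<alpha> \<beta> ?t"
  have "RT \<in> RC" unfolding RT_def right_tip_def RC_def[symmetric]
    using smallest_area_in[OF RCf RCne] by blast
  then obtain c where c: "concave_corner ?t c" "RT = {z \<in> ?t. fst z > fst c}" "\<alpha> / \<beta> * A \<le> area RT"
    unfolding RC_def right_cands_def A_def by blast
  note cp = corner_props[OF c(1) pS sq]
  define UC where "UC = upper_cands \<alpha> \<beta> ?t"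
  have UCsub: "UC \<subseteq> (\<lambda>c. {z \<in> ?t. snd z > snd c}) ` set ps"
  proof
    fix R assume "R \<in> UC"
    then obtain c where c: "concave_corner ?t c" "R = {z \<in> ?t. snd z > snd c}"
      unfolding UC_def upper_cands_def by blast
    then have "c \<in> set ps" using corner_props(1)[OF c(1) pS sq] by simp
    then show "R \<in> (\<lambda>c. {z \<in> ?t. snd z > snd c}) ` set ps" using c by blast
  qed
  have UCf: "finite UC" using finite_surj[OF _ UCsub] by simp
  define UT where "UT = upper_tip \<alpha> \<beta> ?t"
  have UTp: "snd p < snd z" if "z \<in> UT" for z
  proof (cases "UC = {}")
    case True
    then have "UT = {}" unfolding UT_def upper_tip_def smallest_area_def UC_def by simp
    then show ?thesis using that by simp
  next
    case False
    have "UT \<in> UC" unfolding UT_def upper_tip_def UC_def[symmetric]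
      using smallest_area_in[OF UCf False] by blast
    then obtain c' where c': "concave_corner ?t c'" "UT = {z \<in> ?t. snd z > snd c'}"
      unfolding UC_def upper_cands_def by blast
    have "snd p < snd c'" using corner_props(3)[OF c'(1) pS sq] .
    then show ?thesis using that c'(2) by auto
  qed
  define M where "M = {fst z - fst p | z. z \<in> main_body \<alpha> \<beta> ?t \<and> snd z = snd p}"
  have mb: "main_body \<alpha> \<beta> ?t = ?t - RT - UT" unfolding main_body_def RT_def UT_def by simp
  have pM: "0 \<in> M"
  proof -
    have "p \<in> ?t" using p_in_tile[OF pS pU] .
    moreover have "p \<notin> RT" using c(2) cp(2) by auto
    moreover have "p \<notin> UT" using UTp by blast
    ultimately have "p \<in> main_body \<alpha> \<beta> ?t" unfolding mb by blast
    then show ?thesis unfolding M_def by force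
  qed
  define W where "W = fst c - fst p"
  have Mb: "x \<le> W" if xM: "x \<in> M" for x
  proof -
    obtain z where z: "x = fst z - fst p" "z \<in> ?t" "z \<notin> RT"
      using xM unfolding M_def mb by blast
    then have "\<not> fst c < fst z" using c(2) by auto
    then show ?thesis using z(1) unfolding W_def by linarith
  qed
  have bdd: "bdd_above M" using Mb by (rule bdd_aboveI)
  have L0: "0 \<le> a'_len \<alpha> \<beta> ps p" unfolding a'_len_def M_def[symmetric]
    using cSup_upper[OF pM bdd] .
  have LW: "a'_len \<alpha> \<beta> ps p \<le> W" unfolding a'_len_def M_def[symmetric]
    using cSup_least[of M W] pM Mb by blast
  define h where "h = snd c - snd p"
  have h0: "0 < h" unfolding h_def using cp(3) by simp
  have W0: "0 < W" unfolding W_def using cp(2) by simp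
  have cT: "c \<in> ?t" using c(1) unfolding concave_corner_def by simp
  have cC: "c \<in> closure (T0 ps p)" using tile_inner[OF cT cp(2) cp(3)] .
  have "cbox p c \<subseteq> closure (T0 ps p)" using rect_in_tile[OF cC pU cp(2) cp(3)] .
  then have "{fst p..fst c} \<times> {snd p..snd c} \<subseteq> ?t" unfolding tile_eq
    by (cases p, cases c) (auto simp: cbox_Pair_eq)
  then have Wh: "W * h < A / \<beta>" using bt cp(2,3) unfolding beta_tile_def W_def h_def A_def by auto
  have c1: "fst c \<le> 1" using cT tU by (auto simp: unit_square_def)
  have "RT \<subseteq> cbox (fst c, snd p) (1, snd c)"
  proof
    fix z assume z: "z \<in> RT"
    then have "z \<in> ?t" "fst c < fst z" using c(2) by auto
    then have "snd z \<le> snd c" "fst z \<le> 1" "snd p \<le> snd z" using cp(4) tU tile_ge[of z ps p] 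
      by (auto simp: unit_square_def)
    then show "z \<in> cbox (fst c, snd p) (1, snd c)" using \<open>fst c < fst z\<close>
      by (cases z) (auto simp: cbox_Pair_eq)
  qed
  then have "area RT \<le> area (cbox (fst c, snd p) (1, snd c))" by (rule area_sub) auto
  also have "\<dots> = (1 - fst c) * h" unfolding h_def using c1 cp(3) by (simp add: area_box)
  finally have RTb: "area RT \<le> (1 - fst c) * h" .
  have "\<alpha> * (W * h) < \<alpha> * (A / \<beta>)" using Wh a0 by (rule mult_strict_left_mono)
  also have "\<alpha> * (A / \<beta>) = \<alpha> / \<beta> * A" by simp
  also have "\<dots> \<le> (1 - fst c) * h" using c(3) RTb by linarith
  finally have "(\<alpha> * W) * h < (1 - fst c) * h" by (simp add: mult.assoc)
  then have aW: "\<alpha> * W < 1 - fst c" using h0 by (simp add: mult_less_cancel_right)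
  have "a'_len \<alpha> \<beta> ps p * (1 + \<alpha>) \<le> W * (1 + \<alpha>)" using LW a0 by (simp add: mult_right_mono)
  also have "\<dots> \<le> 1 - fst p" using aW unfolding W_def by (simp add: algebra_simps)
  finally show ?thesis using L0 by simp
qed

lemma trap_measure:
  fixes lam \<alpha> :: real
  assumes l0: "0 < lam" and la: "lam < \<alpha>"
  defines "d0 \<equiv> lam / (1 + \<alpha>)"
  defines "B \<equiv> {z::pt. - d0 \<le> snd z \<and> snd z \<le> 0 \<and> - snd z \<le> fst z \<and> lam * fst z \<le> lam + (\<alpha> - lam) * snd z}"
  shows "B \<in> lmeasurable" "area B = lam * (2 + \<alpha>) / (2 * (1 + \<alpha>)^2)"
proof -
  have a0: "0 < \<alpha>" using l0 la by linarith
  have cl: "closed B" unfolding B_def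
    by (intro closed_Collect_conj closed_Collect_le continuous_intros)
  have bd: "B \<subseteq> cbox (0, - d0) ((1 + \<alpha>/lam) * d0 + 1, 0)"
  proof
    fix z assume z: "z \<in> B"
    then have z1: "- d0 \<le> snd z" "snd z \<le> 0" "- snd z \<le> fst z" "lam * fst z \<le> lam + (\<alpha> - lam) * snd z"
      unfolding B_def by auto
    have "(\<alpha> - lam) * snd z \<le> 0" using z1(2) la by (simp add: mult_nonneg_nonpos)
    then have "lam * fst z \<le> lam * 1" using z1(4) by simp
    then have "fst z \<le> 1" using l0 by simp
    moreover have "0 \<le> d0" unfolding d0_def using l0 a0 by simp
    moreover have "0 \<le> (\<alpha>/lam) * d0" using l0 a0 \<open>0 \<le> d0\<close> by simp
    ultimately show "z \<in> cbox (0, - d0) ((1 + \<alpha>/lam) * d0 + 1, 0)" using z1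
      by (cases z) (auto simp: cbox_Pair_eq algebra_simps)
  qed
  have cpt: "compact B" using cl bd by (meson bounded_cbox bounded_subset compact_eq_bounded_closed)
  show Bm: "B \<in> lmeasurable" using lmeasurable_compact[OF cpt] .
  have Bb: "B \<in> sets borel" using cl by (simp add: borel_closed)
  define g where "g v = 1 + \<alpha> / lam * v" for v :: real
  have slice: "(\<lambda>u. (u, v)) -` B = (if - d0 \<le> v \<and> v \<le> 0 then {- v .. 1 + (\<alpha> - lam) / lam * v} else {})" for v
  proof -
    have eq: "lam * (1 + (\<alpha> - lam)/lam * v) = lam + (\<alpha> - lam) * v" using l0 by (simp add: distrib_left)
    have iff: "lam * u \<le> lam + (\<alpha> - lam) * v \<longleftrightarrow> u \<le> 1 + (\<alpha> - lam) / lam * v" for u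
      unfolding eq[symmetric] using l0 by (simp add: mult_le_cancel_left_pos)
    show ?thesis
    proof (rule set_eqI)
      fix u
      have m: "u \<in> (\<lambda>u. (u, v)) -` B \<longleftrightarrow> (- d0 \<le> v \<and> v \<le> 0) \<and> (- v \<le> u \<and> u \<le> 1 + (\<alpha> - lam) / lam * v)"
        unfolding B_def by (simp only: vimage_eq mem_Collect_eq fst_conv snd_conv iff) blast
      show "u \<in> (\<lambda>u. (u, v)) -` B \<longleftrightarrow> u \<in> (if - d0 \<le> v \<and> v \<le> 0 then {- v .. 1 + (\<alpha> - lam) / lam * v} else {})"
      proof (cases "- d0 \<le> v \<and> v \<le> 0")
        case True
        then show ?thesis unfolding m if_P[OF True] atLeastAtMost_iff by blast
      next
        case False
        then show ?thesis unfolding m if_not_P[OF False] by blast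
      qed
    qed
  qed
  have gpos: "0 \<le> g v" if "- d0 \<le> v" for v
  proof -
    have "\<alpha> / lam * d0 = \<alpha> / (1 + \<alpha>)" unfolding d0_def using l0 a0 by simp
    also have "\<dots> < 1" using a0 by simp
    finally have "\<alpha> / lam * d0 < 1" .
    moreover have "\<alpha> / lam * (- d0) \<le> \<alpha> / lam * v" using that l0 a0 by (intro mult_left_mono) auto
    ultimately show ?thesis unfolding g_def by simp
  qed
  have slice_m: "emeasure lborel ((\<lambda>u. (u, v)) -` B) = ennreal (indicator {- d0..0} v * g v)" for v
  proof (cases "- d0 \<le> v \<and> v \<le> 0")
    case True
    have "1 + (\<alpha> - lam) / lam * v - - v = g v" unfolding g_def using l0
      by (simp add: diff_divide_distrib algebra_simps)
    moreover have "(\<lambda>u. (u, v)) -` B = {- v .. 1 + (\<alpha> - lam) / lam * v}" using slice[of v] True by simp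
    moreover have "indicator {- d0..0} v = (1::real)" using True by (simp add: indicator_def)
    moreover have "- v \<le> 1 + (\<alpha> - lam) / lam * v" using gpos[of v] True calculation(1) by simp
    ultimately show ?thesis by simp
  next
    case False
    have "(\<lambda>u. (u, v)) -` B = {}" unfolding slice[of v] by (rule if_not_P[OF False])
    moreover have "indicator {- d0..0} v = (0::real)" using False by (simp add: indicator_def)
    ultimately show ?thesis by simp
  qed
  have "emeasure lborel B = emeasure (lborel \<Otimes>\<^sub>M lborel) B" by (simp add: lborel_prod)
  also have "\<dots> = (\<integral>\<^sup>+v. emeasure lborel ((\<lambda>u. (u, v)) -` B) \<partial>lborel)"
    by (rule lborel_pair.emeasure_pair_measure_alt2) (unfold lborel_prod, simp add: Bb)
  also have "\<dots> = (\<integral>\<^sup>+v. ennreal (indicator {- d0..0} v * g v) \<partial>lborel)" using slice_m by simp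
  also have "\<dots> = ennreal (lam * (2 + \<alpha>) / (2 * (1 + \<alpha>)^2))"
  proof -
    define G where "G v = v + \<alpha> / (2 * lam) * v^2" for v :: real
    have d0p: "- d0 \<le> 0" unfolding d0_def using l0 a0 by simp
    have "(g has_integral (G 0 - G (- d0))) {- d0..0}"
    proof (rule fundamental_theorem_of_calculus[of "- d0" 0 G g, OF d0p])
      fix x assume "x \<in> {- d0..0}"
      have "(G has_real_derivative g x) (at x within {- d0..0})"
        unfolding G_def g_def using l0 by (auto intro!: derivative_eq_intros simp: field_simps)
      then show "(G has_vector_derivative g x) (at x within {- d0..0})"
        by (simp add: has_real_derivative_iff_has_vector_derivative)
    qed
    moreover have "G 0 - G (- d0) = lam * (2 + \<alpha>) / (2 * (1 + \<alpha>)^2)"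
    proof -
      define s where "s = 1 + \<alpha>"
      have s0: "s \<noteq> 0" "lam \<noteq> 0" using a0 l0 unfolding s_def by auto
      have "(0 + \<alpha> / (2 * lam) * 0^2) - (- (lam / s) + \<alpha> / (2 * lam) * (- (lam / s))^2) = lam * (2 * s - \<alpha>) / (2 * s^2)"
        using s0 by (simp add: field_simps power2_eq_square)
      then show ?thesis unfolding s_def G_def d0_def by (simp add: algebra_simps)
    qed
    ultimately have hi: "(g has_integral lam * (2 + \<alpha>) / (2 * (1 + \<alpha>)^2)) {- d0..0}" by simp
    have hi2: "((\<lambda>v. indicator {- d0..0} v * g v) has_integral lam * (2 + \<alpha>) / (2 * (1 + \<alpha>)^2)) UNIV"
    proof -
      have "((\<lambda>v. if v \<in> {- d0..0} then g v else 0) has_integral lam * (2 + \<alpha>) / (2 * (1 + \<alpha>)^2)) UNIV"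
        by (subst has_integral_restrict_UNIV) (rule hi)
      moreover have "(\<lambda>v. indicator {- d0..0} v * g v) = (\<lambda>v. if v \<in> {- d0..0} then g v else 0)"
        by (rule ext) (simp add: indicator_def)
      ultimately show ?thesis by simp
    qed
    have ms: "(\<lambda>v. indicator {- d0..0} v * g v :: real) \<in> borel_measurable borel" unfolding g_def by measurable
    have nn: "0 \<le> indicator {- d0..0} x * g x" for x using gpos[of x] by (simp add: indicator_def)
    show ?thesis by (rule nn_integral_has_integral_lborel[OF ms nn hi2])
  qed
  finally have "emeasure lborel B = ennreal (lam * (2 + \<alpha>) / (2 * (1 + \<alpha>)^2))" .
  moreover have "0 \<le> lam * (2 + \<alpha>) / (2 * (1 + \<alpha>)^2)" using l0 a0 by simp
  ultimately have "measure lborel B = lam * (2 + \<alpha>) / (2 * (1 + \<alpha>)^2)" by (simp add: measure_def)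
  then show "area B = lam * (2 + \<alpha>) / (2 * (1 + \<alpha>)^2)" unfolding area_def using Bb by simp
qed


lemma exists_max:
  assumes "finite X" "X \<noteq> {}" "X \<subseteq> S" "trans r" "total_on S r"
  shows "\<exists>m\<in>X. \<forall>q\<in>X. q = m \<or> (m, q) \<in> r"
  using assms(1,2,3)
proof (induction X rule: finite_ne_induct)
  case (singleton x)
  then show ?case by simp
next
  case (insert x F)
  then obtain m where m: "m \<in> F" "\<forall>q\<in>F. q = m \<or> (m, q) \<in> r" by auto
  have xS: "x \<in> S" "m \<in> S" using insert m by auto
  show ?case
  proof (cases "(x, m) \<in> r")
    case True
    have "\<forall>q\<in>insert x F. q = x \<or> (x, q) \<in> r"
    proof
      fix q assume "q \<in> insert x F"
      then consider "q = x" | "q = m" | "q \<in> F" "(m, q) \<in> r" using m by blast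
      then show "q = x \<or> (x, q) \<in> r"
      proof cases
        case 3 then show ?thesis using True assms(4) by (meson transD)
      qed (use True in auto)
    qed
    then show ?thesis by blast
  next
    case False
    have "x = m \<or> (m, x) \<in> r" using False assms(5) xS unfolding total_on_def by blast
    then have "\<forall>q\<in>insert x F. q = m \<or> (m, q) \<in> r" using m by blast
    then show ?thesis using m(1) by blast
  qed
qed

definition Kset :: "real \<Rightarrow> real \<Rightarrow> pt set" where
  "Kset lam \<alpha> = {z. 0 \<le> fst z \<and> fst z \<le> 1 \<and> snd z \<le> 1 \<and> - (lam / (1 + \<alpha>)) \<le> snd z \<and> 0 \<le> fst z + snd z
      \<and> lam * fst z \<le> lam + (\<alpha> - lam) * snd z}"

lemma convex_Kset: "convex (Kset lam \<alpha>)"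
proof -
  have "Kset lam \<alpha> = {z. inner (-1, 0) z \<le> 0} \<inter> {z. inner (1, 0) z \<le> 1} \<inter> {z. inner (0, 1) z \<le> 1}
     \<inter> {z. inner (0, -1) z \<le> lam / (1 + \<alpha>)} \<inter> {z. inner (-1, -1) z \<le> 0} \<inter> {z. inner (lam, - (\<alpha> - lam)) z \<le> lam}"
    unfolding Kset_def by (auto simp: inner_Pair algebra_simps)
  moreover have "convex \<dots>" by (intro convex_Int convex_halfspace_le)
  ultimately show ?thesis by simp
qed

lemma para_sub:
  fixes lam \<alpha> x y L :: real
  assumes l0: "0 < lam" and la: "lam < \<alpha>" and U: "(x, y) \<in> unit_square" and L0: "0 \<le> L"
    and LB: "L * (1 + \<alpha>) \<le> 1 - x"
  shows "parallelogram lam (x, y) L \<subseteq> unit_square \<union>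
     {z::pt. - (lam / (1 + \<alpha>)) \<le> snd z \<and> snd z \<le> 0 \<and> - snd z \<le> fst z \<and> lam * fst z \<le> lam + (\<alpha> - lam) * snd z}"
proof -
  have a0: "0 < \<alpha>" using l0 la by linarith
  have x: "0 \<le> x" "x \<le> 1" and y: "0 \<le> y" "y \<le> 1" using U by (auto simp: unit_square_def)
  have lL: "lam * L \<le> \<alpha> * L" using la L0 by (simp add: mult_right_mono)
  have L1: "L \<le> 1 / (1 + \<alpha>)" using LB x a0 by (simp add: field_simps)
  have ld: "lam * L \<le> lam / (1 + \<alpha>)" using mult_left_mono[OF L1, of lam] l0 by simp
  have lL0: "0 \<le> lam * L" using l0 L0 by simp
  have F2: "0 \<le> (\<alpha> - lam) * y" using la y by simp
  have s1: "x + (1 + \<alpha>) * L \<le> 1" using LB by (simp add: algebra_simps)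
  have s2: "x + \<alpha> * L \<le> 1" using s1 L0 by (simp add: algebra_simps)
  have F1: "lam * (x + (1 + \<alpha>) * L) \<le> lam * 1" using s1 l0 by (intro mult_left_mono) auto
  have F1': "lam * (x + \<alpha> * L) \<le> lam * 1" using s2 l0 by (intro mult_left_mono) auto
  have F0: "lam * x \<le> lam * 1" using x l0 by (intro mult_left_mono) auto
  have F0': "lam * (x + L) \<le> lam * 1" using s1 L0 a0 l0
    by (intro mult_left_mono) (auto simp: algebra_simps intro: order_trans[of _ "x + (1 + \<alpha>) * L"] mult_nonneg_nonneg)
  have dpos: "0 \<le> lam / (1 + \<alpha>)" using l0 a0 by simp
  have c1: "(x, y) \<in> Kset lam \<alpha>"
    unfolding Kset_def using x y F0 F2 dpos by (auto simp: algebra_simps)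
  have c2: "(x + L, y) \<in> Kset lam \<alpha>"
    unfolding Kset_def using x y F0' F2 dpos L0 s1 lL lL0 by (auto simp: algebra_simps)
  have c3: "(x + (1 + lam) * L, y - lam * L) \<in> Kset lam \<alpha>"
    unfolding Kset_def using x y F1 F2 dpos L0 s1 lL lL0 ld by (auto simp: algebra_simps)
  have c4: "(x + lam * L, y - lam * L) \<in> Kset lam \<alpha>"
    unfolding Kset_def using x y F1' F2 dpos L0 s1 lL lL0 ld by (auto simp: algebra_simps)
  have "parallelogram lam (x, y) L \<subseteq> Kset lam \<alpha>"
    unfolding parallelogram_def
    by (rule hull_minimal) (use c1 c2 c3 c4 convex_Kset in auto)
  moreover have "Kset lam \<alpha> \<subseteq> unit_square \<union>
     {z::pt. - (lam / (1 + \<alpha>)) \<le> snd z \<and> snd z \<le> 0 \<and> - snd z \<le> fst z \<and> lam * fst z \<le> lam + (\<alpha> - lam) * snd z}"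
  proof
    fix z assume z: "z \<in> Kset lam \<alpha>"
    show "z \<in> unit_square \<union> {z::pt. - (lam / (1 + \<alpha>)) \<le> snd z \<and> snd z \<le> 0 \<and> - snd z \<le> fst z \<and> lam * fst z \<le> lam + (\<alpha> - lam) * snd z}"
    proof (cases "0 \<le> snd z")
      case True
      then show ?thesis using z unfolding Kset_def unit_square_def by (cases z) auto
    next
      case False
      then show ?thesis using z unfolding Kset_def by auto
    qed
  qed
  ultimately show ?thesis by blast
qed

theorem lemma5:
  fixes \<alpha> \<beta> lam :: real and S :: "pt set" and ps :: "pt list"
    and gy :: "(pt \<times> pt) set"
  assumes "\<beta> \<ge> 3 + 2 * \<alpha>" and "0 < lam" and "lam < \<alpha>"
    and "finite S" and "S \<subseteq> unit_square" and "(0, 0) \<in> S"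
    and "distinct ps" and "set ps = S"
    and "sorted_wrt (\<lambda>p q. fst p + snd p \<ge> fst q + snd q) ps"
    and "strict_linear_order_on S gy"
    and "\<forall>p\<in>S. \<forall>q\<in>S. snd p > snd q \<longrightarrow> (p, q) \<in> gy"
  shows "(\<Sum>p\<in>level1 \<alpha> \<beta> lam ps gy. area (paraA \<alpha> \<beta> lam ps p))
           \<le> (2 * (1 + \<alpha>)^2 + lam * (2 + \<alpha>)) / (2 * (1 + \<alpha>)^2)"
proof -
  note l0 = assms(2) and la = assms(3)
  have a0: "0 < \<alpha>" using l0 la by linarith
  have ba: "1 + \<alpha> \<le> \<beta>" using assms(1) a0 by linarith
  have sq: "set ps \<subseteq> unit_square" using assms(5,8) by simp
  have tr: "trans gy" and tot: "total_on S gy" using assms(10) unfolding strict_linear_order_on_def by auto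
  define L1 where "L1 = level1 \<alpha> \<beta> lam ps gy"
  define P where "P p = paraA \<alpha> \<beta> lam ps p" for p
  define B where "B = {z::pt. - (lam / (1 + \<alpha>)) \<le> snd z \<and> snd z \<le> 0 \<and> - snd z \<le> fst z \<and> lam * fst z \<le> lam + (\<alpha> - lam) * snd z}"
  have L1sub: "L1 \<subseteq> set ps" unfolding L1_def level1_def G_nodes_def by auto
  have fin: "finite L1" using finite_subset[OF L1sub] by simp
  have Psub: "P p \<subseteq> unit_square \<union> B" if "p \<in> L1" for p
  proof -
    have pS: "p \<in> set ps" and bt: "beta_tile \<beta> (tile ps p)"
      using that unfolding L1_def level1_def G_nodes_def by auto
    have Lb: "0 \<le> a'_len \<alpha> \<beta> ps p" "a'_len \<alpha> \<beta> ps p * (1 + \<alpha>) \<le> 1 - fst p"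
      using L_bound[OF pS sq bt ba a0] by auto
    have "(fst p, snd p) \<in> unit_square" using pS sq by auto
    from para_sub[OF l0 la this Lb] show ?thesis
      unfolding P_def paraA_def B_def by simp
  qed
  have Pm: "P p \<in> lmeasurable" for p
    unfolding P_def paraA_def parallelogram_def
    by (intro lmeasurable_compact compact_convex_hull finite_imp_compact) auto
  have nodisj: "P a \<inter> P b = {}" if a: "a \<in> L1" and b: "b \<in> G_nodes \<beta> ps" "a \<noteq> b" "(a, b) \<in> gy" for a b
  proof (rule ccontr)
    assume ne: "P a \<inter> P b \<noteq> {}"
    define X where "X = out_candidates \<alpha> \<beta> lam ps gy a"
    have bX: "b \<in> X" unfolding X_def out_candidates_def using b ne unfolding P_def by auto
    have XS: "X \<subseteq> S" unfolding X_def out_candidates_def G_nodes_def using assms(8) by auto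
    have Xf: "finite X" using finite_subset[OF XS assms(4)] .
    obtain m where m: "m \<in> X" "\<forall>q\<in>X. q = m \<or> (m, q) \<in> gy"
      using exists_max[OF Xf _ XS tr tot] bX by blast
    have aG: "a \<in> G_nodes \<beta> ps" using a unfolding L1_def level1_def by auto
    have "G_edge \<alpha> \<beta> lam ps gy a m" unfolding G_edge_def using aG m unfolding X_def by blast
    then show False using a unfolding L1_def level1_def by blast
  qed
  have disj: "disjoint_family_on P L1"
    unfolding disjoint_family_on_def
  proof (intro ballI impI)
    fix a b assume ab: "a \<in> L1" "b \<in> L1" "a \<noteq> b"
    have abS: "a \<in> S" "b \<in> S" using ab L1sub assms(8) by auto
    have bG: "b \<in> G_nodes \<beta> ps" "a \<in> G_nodes \<beta> ps" using ab unfolding L1_def level1_def by auto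
    consider "(a, b) \<in> gy" | "(b, a) \<in> gy" using tot abS ab(3) unfolding total_on_def by blast
    then show "P a \<inter> P b = {}"
    proof cases
      case 1 then show ?thesis using nodisj[OF ab(1) bG(1) ab(3)] by simp
    next
      case 2 then show ?thesis using nodisj[OF ab(2) bG(2)] ab(3) by blast
    qed
  qed
  have "(\<Sum>p\<in>L1. area (P p)) = area (\<Union>p\<in>L1. P p)"
    unfolding area_def
  proof (rule measure_finite_Union[symmetric, OF fin _ disj])
    show "P ` L1 \<subseteq> sets lebesgue" using Pm by (auto intro: fmeasurableD)
    show "emeasure lebesgue (P i) \<noteq> \<infinity>" for i using fmeasurableD2[OF Pm[of i]] by simp
  qed
  also have "\<dots> \<le> area (unit_square \<union> B)"
  proof (rule area_sub)
    show "(\<Union>p\<in>L1. P p) \<subseteq> unit_square \<union> B" using Psub by blast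
    show "unit_square \<union> B \<in> lmeasurable" using trap_measure(1)[OF l0 la] unfolding B_def unit_square_cbox
      by auto
  qed
  also have "\<dots> \<le> area unit_square + area B" unfolding area_def
    by (rule measure_Un_le) (use trap_measure(1)[OF l0 la] in \<open>auto simp: B_def unit_square_cbox\<close>)
  also have "area unit_square = 1" unfolding unit_square_cbox by (simp add: area_box)
  also have "area B = lam * (2 + \<alpha>) / (2 * (1 + \<alpha>)^2)" unfolding B_def using trap_measure(2)[OF l0 la] .
  also have "1 + lam * (2 + \<alpha>) / (2 * (1 + \<alpha>)^2) = (2 * (1 + \<alpha>)^2 + lam * (2 + \<alpha>)) / (2 * (1 + \<alpha>)^2)"
    using a0 by (simp add: field_simps)
  finally show ?thesis unfolding L1_def P_def .
qed

end
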